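(* Let $1\le m<n$, $d\in[n]$, let every $v_j$ be $d$-self-bounding, fix $\mathbf s$, rename bidders so that $v_1(\mathbf s)\ge\cdots\ge v_n(\mathbf s)>0$, and let $k=\max\{i:v_i(\mathbf s)>v_m(\mathbf s)/2\}$. For $i\in[n]$ define $A_i=\sum_{j=1}^k\frac{m}{j(j+1)}\log_2^\dagger\!\big(v_j(\mathbf s)/\underline v_j^{(i)}(\mathbf s)\big)$. Then $\sum_{i=m}^kA_i\le 2dm$.
   Context: Signals $s_i\in S_i\subseteq\mathbb R$, $\mathbf S=S_1\times\cdots\times S_n$, valuations $v_j:\mathbf S\to\mathbb R_{>0}$. Lower estimates $\underline v_j^{(i)}(\mathbf s)=\inf_{o_i\in S_i}v_j(o_i,\mathbf s_{-i})$. $v$ is $d$-self-bounding if $\sum_i(v(\mathbf s)-\inf_{o_i}v(o_i,\mathbf s_{-i}))\le d\,v(\mathbf s)$ for all $\mathbf s$. $\log_2^\dagger(\alpha)=\max(0,\min(1,\log_2\alpha))$, with $a/0=\infty$, $\log_2\infty=\infty$. *)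

theory Defs
  imports "HOL-Library.FuncSet" Complex_Main
begin

definition profiles :: "nat \<Rightarrow> (nat \<Rightarrow> real set) \<Rightarrow> (nat \<Rightarrow> real) set" where
  "profiles n S = Pi\<^sub>E {1..n} S"

definition lower_est :: "nat \<Rightarrow> (nat \<Rightarrow> real set) \<Rightarrow> ((nat \<Rightarrow> real) \<Rightarrow> real) \<Rightarrow> (nat \<Rightarrow> real) \<Rightarrow> real" where
  "lower_est i S v s = (INF x\<in>S i. v (s(i := x)))"

definition self_bounding :: "nat \<Rightarrow> (nat \<Rightarrow> real set) \<Rightarrow> real \<Rightarrow> ((nat \<Rightarrow> real) \<Rightarrow> real) \<Rightarrow> bool" where
  "self_bounding n S d v \<longleftrightarrow>
     (\<forall>s\<in>profiles n S. (\<Sum>i=1..n. v s - lower_est i S v s) \<le> d * v s)"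

text \<open>log2dagger(a/b) = max(0, min(1, log_2 (a/b))), with a/0 = infinity and
log_2 infinity = infinity (so the value is 1 when b = 0).\<close>
definition log2dag_ratio :: "real \<Rightarrow> real \<Rightarrow> real" where
  "log2dag_ratio a b = (if b = 0 then 1 else max 0 (min 1 (log 2 (a / b))))"

end

theory Submission
  imports Defs "HOL-Analysis.Analysis"
begin

lemma log_bound:
  fixes a b :: real
  assumes "0 \<le> b" "b \<le> a" "0 < a"
  shows "log2dag_ratio a b \<le> 2 * ((a - b) / a)"
proof (cases "b = 0")
  case True
  then show ?thesis using assms by (simp add: log2dag_ratio_def)
next
  case False
  define z where "z = b / a"
  have zpos: "0 < z" and z1: "z \<le> 1" using assms False by (auto simp: z_def field_simps)
  have lg: "log 2 (a / b) = - log 2 z" using zpos assms False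
    by (simp add: z_def log_divide)
  have eq: "(a - b) / a = 1 - z" using assms by (simp add: z_def field_simps)
  have "max 0 (min 1 (- log 2 z)) \<le> 2 * (1 - z)"
  proof (cases "z \<le> 1/2")
    case True
    then show ?thesis by simp
  next
    case False
    define t where "t = 2 * z - 1"
    have t01: "0 \<le> t" "t \<le> 1" using False z1 by (auto simp: t_def)
    have zz: "z = (1 - t) * (1/2) + t * 1" by (simp add: t_def algebra_simps)
    have cv: "convex_on {0<..} (\<lambda>x. - log 2 x)" by (rule minus_log_convex) simp
    have "- log 2 ((1 - t) * (1/2) + t * 1) \<le> (1 - t) * (- log 2 (1/2)) + t * (- log 2 1)"
      using convex_onD[OF cv, of t "1/2" 1] t01 by simp
    also have "\<dots> = 1 - t" by (simp add: log_divide)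
    finally have "- log 2 ((1 - t) * (1/2) + t * 1) \<le> 1 - t" .
    then have "- log 2 z \<le> 1 - t" by (simp only: zz[symmetric])
    then have "- log 2 z \<le> 2 * (1 - z)" by (simp add: t_def)
    then show ?thesis using z1 by simp
  qed
  then show ?thesis using False lg eq by (simp add: log2dag_ratio_def)
qed

lemma telesc: "(\<Sum>j=1..k. 1 / (real j * (real j + 1))) = real k / (real k + 1)"
proof (induction k)
  case 0 then show ?case by simp
next
  case (Suc k)
  have "(\<Sum>j=1..Suc k. 1 / (real j * (real j + 1))) = real k / (real k + 1) + 1 / ((real k + 1) * (real k + 2))"
    using Suc by (simp add: add.commute)
  also have "\<dots> = real (Suc k) / (real (Suc k) + 1)"
    by (simp add: divide_simps) (simp add: algebra_simps)
  finally show ?case .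
qed

theorem mainTheorem18:
  fixes n m d :: nat and S :: "nat \<Rightarrow> real set"
    and v :: "nat \<Rightarrow> (nat \<Rightarrow> real) \<Rightarrow> real" and s :: "nat \<Rightarrow> real"
  assumes "1 \<le> m" "m < n"
    and "1 \<le> d" "d \<le> n"
    and pos: "\<forall>j\<in>{1..n}. \<forall>t\<in>profiles n S. v j t > 0"
    and sb: "\<forall>j\<in>{1..n}. self_bounding n S (real d) (v j)"
    and s: "s \<in> profiles n S"
    and sorted: "\<forall>j\<in>{1..n}. \<forall>j'\<in>{1..n}. j \<le> j' \<longrightarrow> v j' s \<le> v j s"
  shows "let k = Max {i\<in>{1..n}. v i s > v m s / 2};
             A = (\<lambda>i. \<Sum>j=1..k. (real m / (real j * (real j + 1))) *
                        log2dag_ratio (v j s) (lower_est i S (v j) s))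
         in (\<Sum>i=m..k. A i) \<le> 2 * real d * real m"
proof -
  define k where "k = Max {i\<in>{1..n}. v i s > v m s / 2}"
  define c where "c = (\<lambda>j::nat. real m / (real j * (real j + 1)))"
  have mn: "m \<in> {1..n}" using assms by auto
  have vm: "v m s > 0" using pos mn s by blast
  have kn: "k \<le> n"
    unfolding k_def using mn vm by (subst Max_le_iff) auto
  have Lb: "0 \<le> lower_est i S (v j) s \<and> lower_est i S (v j) s \<le> v j s"
    if i: "i \<in> {1..n}" and j: "j \<in> {1..n}" for i j
  proof -
    have si: "s i \<in> S i" using s i by (auto simp: profiles_def PiE_def Pi_def)
    have upd: "s(i := x) \<in> profiles n S" if "x \<in> S i" for x
      using s that i by (auto simp: profiles_def PiE_def Pi_def extensional_def)
    have p: "v j (s(i := x)) > 0" if "x \<in> S i" for x using pos j upd[OF that] by blast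
    have "0 \<le> (INF x\<in>S i. v j (s(i := x)))"
      using si p by (intro cINF_greatest) (auto intro: less_imp_le)
    moreover have "(INF x\<in>S i. v j (s(i := x))) \<le> v j (s(i := s i))"
      using si p by (intro cINF_lower) (auto intro!: bdd_belowI2[where m=0] less_imp_le)
    ultimately show ?thesis by (simp add: lower_est_def)
  qed
  have sub: "{m..k} \<subseteq> {1..n}" using kn assms by auto
  have perj: "(\<Sum>i=m..k. v j s - lower_est i S (v j) s) \<le> real d * v j s"
    if j: "j \<in> {1..n}" for j
  proof -
    have "(\<Sum>i=m..k. v j s - lower_est i S (v j) s) \<le> (\<Sum>i=1..n. v j s - lower_est i S (v j) s)"
      using sub Lb[OF _ j] by (intro sum_mono2) auto
    also have "\<dots> \<le> real d * v j s" using sb j s by (simp add: self_bounding_def)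
    finally show ?thesis .
  qed
  have "(\<Sum>i=m..k. \<Sum>j=1..k. c j * log2dag_ratio (v j s) (lower_est i S (v j) s))
      \<le> (\<Sum>i=m..k. \<Sum>j=1..k. c j * (2 * ((v j s - lower_est i S (v j) s) / v j s)))"
  proof (intro sum_mono mult_left_mono)
    fix i j assume i: "i \<in> {m..k}" and j: "j \<in> {1..k}"
    have i': "i \<in> {1..n}" and j': "j \<in> {1..n}" using i j sub kn by auto
    show "log2dag_ratio (v j s) (lower_est i S (v j) s) \<le> 2 * ((v j s - lower_est i S (v j) s) / v j s)"
      using Lb[OF i' j'] pos j' s by (intro log_bound) auto
    show "0 \<le> c j" by (simp add: c_def)
  qed
  also have "\<dots> = (\<Sum>j=1..k. (2 * c j / v j s) * (\<Sum>i=m..k. v j s - lower_est i S (v j) s))"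
    by (subst sum.swap, rule sum.cong[OF refl], simp add: sum_distrib_left, rule sum.cong[OF refl], simp add: algebra_simps)
  also have "\<dots> \<le> (\<Sum>j=1..k. (2 * c j / v j s) * (real d * v j s))"
  proof (intro sum_mono mult_left_mono)
    fix j assume j: "j \<in> {1..k}"
    have j': "j \<in> {1..n}" using j kn by auto
    show "(\<Sum>i=m..k. v j s - lower_est i S (v j) s) \<le> real d * v j s" using perj[OF j'] .
    show "0 \<le> 2 * c j / v j s" using pos j' s by (simp add: c_def less_imp_le)
  qed
  also have "\<dots> = (\<Sum>j=1..k. 2 * real d * real m * (1 / (real j * (real j + 1))))"
  proof (intro sum.cong refl)
    fix j assume j: "j \<in> {1..k}"
    have j': "j \<in> {1..n}" using j kn by auto
    have "v j s > 0" using pos j' s by blast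
    then have "2 * c j / v j s * (real d * v j s) = 2 * real d * c j" by (simp add: field_simps)
    then show "2 * c j / v j s * (real d * v j s) = 2 * real d * real m * (1 / (real j * (real j + 1)))"
      by (simp add: c_def)
  qed
  also have "\<dots> = 2 * real d * real m * (real k / (real k + 1))"
    by (subst sum_distrib_left[symmetric], subst telesc, rule refl)
  also have "\<dots> \<le> 2 * real d * real m" by (simp add: field_simps)
  finally show ?thesis unfolding Let_def k_def[symmetric] c_def by simp
qed

end
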